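(* Let $r\ge2$ and let $\mathbf L^{\mathrm{MAP}}\in\mathbb R_+^{(2^r-1)\times r!}$ be the matrix with rows indexed by $\mathbf y\in\{0,1\}^r\setminus\{\mathbf 0\}$, columns indexed by $\sigma\in\Pi_r$, and entries \[ \ell^{\mathrm{MAP}}(\mathbf y,\sigma)=1-\frac{1}{\|\mathbf y\|_1}\sum_{i:\,y_i=1}\frac{1}{\sigma(i)}\sum_{j=1}^{\sigma(i)}y_{\sigma^{-1}(j)} . \] Then $\operatorname{rank}(\mathbf L^{\mathrm{MAP}})\ge\frac{r(r-1)}{2}-2$.
   Context: $\Pi_r$ is the set of all permutations (bijections) $\sigma:[r]\to[r]$, where $[r]=\{1,\dots,r\}$ and $\sigma(i)$ is the position of element $i$; $\sigma^{-1}(j)$ is the element placed at position $j$. $\|\mathbf y\|_1=\sum_i|y_i|$. Equivalently, $\ell^{\mathrm{MAP}}(\mathbf y,\sigma)=1-\frac{1}{\|\mathbf y\|_1}\sum_{i=1}^r\sum_{j=1}^{i}\frac{y_iy_j}{\max(\sigma(i),\sigma(j))}$. *)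

theory Defs
  imports "Jordan_Normal_Form.DL_Rank" "HOL-Combinatorics.Permutations"
begin

definition ys_set :: "nat \<Rightarrow> (nat \<Rightarrow> real) set" where
  "ys_set r = {y. (\<forall>i\<in>{1..r}. y i \<in> {0,1}) \<and> (\<forall>i. i \<notin> {1..r} \<longrightarrow> y i = 0)
                  \<and> y \<noteq> (\<lambda>_. 0)}"

text \<open>Permutations of [r]; sigma i is the position of element i.\<close>
definition perms_set :: "nat \<Rightarrow> (nat \<Rightarrow> nat) set" where
  "perms_set r = {\<sigma>. \<sigma> permutes {1..r}}"

definition l1norm :: "nat \<Rightarrow> (nat \<Rightarrow> real) \<Rightarrow> real" where
  "l1norm r y = (\<Sum>i=1..r. \<bar>y i\<bar>)"

definition ell_MAP :: "nat \<Rightarrow> (nat \<Rightarrow> real) \<Rightarrow> (nat \<Rightarrow> nat) \<Rightarrow> real" where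
  "ell_MAP r y \<sigma> = 1 - (1 / l1norm r y) *
     (\<Sum>i\<in>{i\<in>{1..r}. y i = 1}. (1 / real (\<sigma> i)) * (\<Sum>j=1..\<sigma> i. y (inv_into UNIV \<sigma> j)))"

definition L_MAP :: "nat \<Rightarrow> (nat \<Rightarrow> real) list \<Rightarrow> (nat \<Rightarrow> nat) list \<Rightarrow> real mat" where
  "L_MAP r ys ss = mat (length ys) (length ss) (\<lambda>(a,b). ell_MAP r (ys ! a) (ss ! b))"

end

theory Submission
  imports Defs
begin

definition H :: "nat \<Rightarrow> nat \<Rightarrow> real" where
  "H a b = 1 - 1 / (2 * real (min a b)) - 1 / real (max a b)"
lemma H_sym: "H a b = H b a" unfolding H_def by (simp add: min.commute max.commute)

definition TT :: "nat \<Rightarrow> (nat \<Rightarrow> nat \<Rightarrow> real) \<Rightarrow> (nat \<Rightarrow> nat) \<Rightarrow> real" where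
  "TT r C \<sigma> = (\<Sum>x\<in>{1..r}. \<Sum>y\<in>{1..r}. C x y * H (\<sigma> x) (\<sigma> y))"

lemma sum2_reindex:
  assumes "\<tau> permutes S"
  shows "(\<Sum>x\<in>S. \<Sum>y\<in>S. F (\<tau> x) (\<tau> y)) = (\<Sum>x\<in>S. \<Sum>y\<in>S. (F x y :: real))"
proof -
  have b: "bij_betw \<tau> S S" using assms permutes_imp_bij by blast
  have "(\<Sum>x\<in>S. \<Sum>y\<in>S. F (\<tau> x) (\<tau> y)) = (\<Sum>x\<in>S. \<Sum>y\<in>S. F (\<tau> x) y)"
    by (rule sum.cong[OF refl], rule sum.reindex_bij_betw[OF b])
  also have "\<dots> = (\<Sum>x\<in>S. \<Sum>y\<in>S. F x y)"
    by (rule sum.reindex_bij_betw[OF b, where g = "\<lambda>x. \<Sum>y\<in>S. F x y"])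
  finally show ?thesis .
qed

lemma swap_diff:
  assumes sp: "\<sigma> permutes {1..r}" and u: "u \<in> {1..r}" and v: "v \<in> {1..r}" and uv: "u \<noteq> v"
    and diag: "\<And>x. C x x = 0" and sym: "\<And>x y. C x y = C y x"
  shows "TT r C \<sigma> - TT r C (\<sigma> \<circ> transpose u v)
     = 2 * (\<Sum>y\<in>{1..r}-{u,v}. (C u y - C v y) * (H (\<sigma> u) (\<sigma> y) - H (\<sigma> v) (\<sigma> y)))"
proof -
  define \<tau> where "\<tau> = transpose u v"
  define K where "K a b = H (\<sigma> a) (\<sigma> b)" for a b
  have tp: "\<tau> permutes {1..r}" unfolding \<tau>_def using u v by (simp add: permutes_swap_id)
  have tt: "\<tau> (\<tau> x) = x" for x unfolding \<tau>_def by simp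
  have Ks: "K a b = K b a" for a b unfolding K_def by (rule H_sym)
  have "TT r C (\<sigma> \<circ> \<tau>) = (\<Sum>x\<in>{1..r}. \<Sum>y\<in>{1..r}. C (\<tau> (\<tau> x)) (\<tau> (\<tau> y)) * K (\<tau> x) (\<tau> y))"
    unfolding TT_def K_def by (simp add: tt)
  also have "\<dots> = (\<Sum>x\<in>{1..r}. \<Sum>y\<in>{1..r}. C (\<tau> x) (\<tau> y) * K x y)"
    by (rule sum2_reindex[OF tp, where F = "\<lambda>x y. C (\<tau> x) (\<tau> y) * K x y"])
  finally have e1: "TT r C (\<sigma> \<circ> \<tau>) = (\<Sum>x\<in>{1..r}. \<Sum>y\<in>{1..r}. C (\<tau> x) (\<tau> y) * K x y)" .
  define D where "D x y = (C x y - C (\<tau> x) (\<tau> y)) * K x y" for x y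
  have e2: "TT r C \<sigma> - TT r C (\<sigma> \<circ> \<tau>) = (\<Sum>x\<in>{1..r}. \<Sum>y\<in>{1..r}. D x y)"
    unfolding e1 unfolding TT_def D_def K_def
    by (simp add: sum_subtractf[symmetric] left_diff_distrib)
  define R' where "R' = {1..r} - {u,v}"
  have R: "{1..r} = insert u (insert v R')" using u v unfolding R'_def by auto
  have nu: "u \<notin> insert v R'" and nv: "v \<notin> R'" and fR: "finite R'" using uv unfolding R'_def by auto
  have split: "(\<Sum>x\<in>{1..r}. g x) = g u + g v + (\<Sum>x\<in>R'. g x)" for g :: "nat \<Rightarrow> real"
    unfolding R using nu nv fR by (simp add: sum.insert_remove)
  have tu: "\<tau> u = v" "\<tau> v = u" and tx: "x \<in> R' \<Longrightarrow> \<tau> x = x" for x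
    unfolding \<tau>_def R'_def by auto
  have "(\<Sum>x\<in>{1..r}. \<Sum>y\<in>{1..r}. D x y) =
     (\<Sum>y\<in>R'. D u y) + (\<Sum>y\<in>R'. D v y) + (\<Sum>x\<in>R'. D x u + D x v)"
  proof -
    have z: "(\<Sum>y\<in>R'. D x y) = 0" if "x \<in> R'" for x
      using that tx unfolding D_def by (intro sum.neutral) auto
    have "D u u = 0" "D u v = 0" "D v u = 0" "D v v = 0"
      unfolding D_def using tu diag sym by auto
    then show ?thesis unfolding split[of "\<lambda>x. \<Sum>y\<in>{1..r}. D x y"] split
      using z by (simp add: sum.distrib)
  qed
  also have "\<dots> = 2 * (\<Sum>y\<in>R'. (C u y - C v y) * (K u y - K v y))"
  proof -
    have a: "D u y + D v y = (C u y - C v y) * (K u y - K v y)" if "y \<in> R'" for y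
      using that tx tu unfolding D_def by (simp add: algebra_simps)
    have b: "D y u + D y v = (C u y - C v y) * (K u y - K v y)" if "y \<in> R'" for y
      using that tx tu unfolding D_def by (simp add: algebra_simps sym[of y] Ks[of y])
    define E where "E y = (C u y - C v y) * (K u y - K v y)" for y
    have s1: "(\<Sum>y\<in>R'. D u y) + (\<Sum>y\<in>R'. D v y) = (\<Sum>y\<in>R'. E y)"
      unfolding sum.distrib[symmetric] E_def by (rule sum.cong[OF refl a])
    have s2: "(\<Sum>x\<in>R'. D x u + D x v) = (\<Sum>y\<in>R'. E y)"
      unfolding E_def by (rule sum.cong[OF refl b])
    show ?thesis using s1 s2 unfolding E_def by linarith
  qed
  finally show ?thesis using e2 unfolding \<tau>_def R'_def K_def by simp
qed

lemma perm2:
  fixes r u v :: nat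
  assumes u: "u \<in> {1..r}" and v: "v \<in> {1..r}" and uv: "u \<noteq> v" and r: "2 \<le> r"
  shows "\<exists>\<sigma>. \<sigma> permutes {1..r} \<and> \<sigma> u = 1 \<and> \<sigma> v = 2"
proof -
  define \<rho> where "\<rho> = transpose u 1"
  define \<sigma> where "\<sigma> = transpose (\<rho> v) 2 \<circ> \<rho>"
  have p1: "\<rho> permutes {1..r}" unfolding \<rho>_def using u r by (simp add: permutes_swap_id)
  have rv: "\<rho> v \<in> {1..r}" using permutes_in_image[OF p1] v by blast
  have p2: "\<sigma> permutes {1..r}" unfolding \<sigma>_def
    by (rule permutes_compose[OF p1]) (use rv r in \<open>simp add: permutes_swap_id\<close>)
  have "\<rho> u = 1" unfolding \<rho>_def by simp
  moreover have "\<rho> v \<noteq> 1" unfolding \<rho>_def using uv by (auto simp: transpose_def)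
  ultimately have "\<sigma> u = 1" "\<sigma> v = 2" unfolding \<sigma>_def by (auto simp: transpose_def)
  with p2 show ?thesis by blast
qed

lemma perm3:
  fixes r u v w :: nat
  assumes u: "u \<in> {1..r}" and v: "v \<in> {1..r}" and w: "w \<in> {1..r}"
    and uv: "u \<noteq> v" and uw: "u \<noteq> w" and vw: "v \<noteq> w" and r: "3 \<le> r"
  shows "\<exists>\<sigma>. \<sigma> permutes {1..r} \<and> \<sigma> u = 1 \<and> \<sigma> v = 2 \<and> \<sigma> w = 3"
proof -
  obtain \<rho> where p1: "\<rho> permutes {1..r}" and ru: "\<rho> u = 1" and rv: "\<rho> v = 2"
    using perm2[OF u v uv] r by auto
  define \<sigma> where "\<sigma> = transpose (\<rho> w) 3 \<circ> \<rho>"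
  have rw: "\<rho> w \<in> {1..r}" using permutes_in_image[OF p1] w by blast
  have p2: "\<sigma> permutes {1..r}" unfolding \<sigma>_def
    by (rule permutes_compose[OF p1]) (use rw r in \<open>simp add: permutes_swap_id\<close>)
  have inj: "inj \<rho>" using p1 permutes_inj by blast
  have "\<rho> w \<noteq> 1" "\<rho> w \<noteq> 2" using inj ru rv uw vw by (metis injD)+
  then have "\<sigma> u = 1" "\<sigma> v = 2" "\<sigma> w = 3" unfolding \<sigma>_def using ru rv by (auto simp: transpose_def)
  with p2 show ?thesis by blast
qed

lemma perm_other:
  fixes r u y k :: nat
  assumes "\<sigma> permutes {1..r}" "y \<in> {1..r}" "y \<noteq> u" "\<sigma> u = k"
  shows "\<sigma> y \<noteq> k" "\<sigma> y \<in> {1..r}"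
  using assms permutes_inj[OF assms(1)] permutes_in_image[OF assms(1)] by (auto dest: injD)

lemma H12: "3 \<le> s \<Longrightarrow> H 1 s - H 2 s = - 1/4"
  unfolding H_def by (simp add: min_def max_def)
lemma H23a: "H 2 1 - H 3 1 = - 1/6"
  unfolding H_def by (simp add: min_def max_def)
lemma H23: "4 \<le> s \<Longrightarrow> H 2 s - H 3 s = - 1/12"
  unfolding H_def by (simp add: min_def max_def)
lemma H_nonneg: "1 \<le> a \<Longrightarrow> 1 \<le> b \<Longrightarrow> a \<noteq> b \<Longrightarrow> 0 \<le> H a b"
proof -
  assume a: "1 \<le> a" and b: "1 \<le> b" and ab: "a \<noteq> b"
  have m1: "1 \<le> real (min a b)" using a b by simp
  have m2: "2 \<le> real (max a b)" using a b ab by (simp add: max_def)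
  have "1 / (2 * real (min a b)) \<le> 1/2" using m1 by (simp add: field_simps)
  moreover have "1 / real (max a b) \<le> 1/2" using m2 by (simp add: field_simps)
  ultimately show ?thesis unfolding H_def by linarith
qed
lemma H13: "H 1 3 = 1/6" unfolding H_def by simp


lemma aux_lin: "(d::real) * (-1/6) + s * (-1/12) = 0 \<Longrightarrow> d + s = 0 \<Longrightarrow> d = 0"
  by (simp add: field_simps)

lemma core:
  fixes r :: nat and C :: "nat \<Rightarrow> nat \<Rightarrow> real"
  assumes r: "3 \<le> r" and diag: "\<And>x. C x x = 0" and sym: "\<And>x y. C x y = C y x"
    and T0: "\<And>\<sigma>. \<sigma> permutes {1..r} \<Longrightarrow> TT r C \<sigma> = 0"
  shows "x \<in> {1..r} \<Longrightarrow> y \<in> {1..r} \<Longrightarrow> C x y = 0"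
proof -
  assume xR: "x \<in> {1..r}" and yR: "y \<in> {1..r}"
  let ?R = "{1..r::nat}"
  have zero_sum: "(\<Sum>y\<in>?R-{u,v}. (C u y - C v y) * (H (\<sigma> u) (\<sigma> y) - H (\<sigma> v) (\<sigma> y))) = 0"
    if "\<sigma> permutes ?R" "u \<in> ?R" "v \<in> ?R" "u \<noteq> v" for \<sigma> u v
  proof -
    have "\<sigma> \<circ> transpose u v permutes ?R"
      using that by (intro permutes_compose) (auto simp: permutes_swap_id)
    then have "TT r C \<sigma> - TT r C (\<sigma> \<circ> transpose u v) = 0" using T0 that(1) by simp
    then show ?thesis using swap_diff[OF that diag sym] by simp
  qed
  have stepa: "(\<Sum>y\<in>?R-{u,v}. C u y - C v y) = 0" if u: "u \<in> ?R" and v: "v \<in> ?R" and uv: "u \<noteq> v" for u v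
  proof -
    obtain \<sigma> where sp: "\<sigma> permutes ?R" and su: "\<sigma> u = 1" and sv: "\<sigma> v = 2"
      using perm2[OF u v uv] r by auto
    have "(C u y - C v y) * (H (\<sigma> u) (\<sigma> y) - H (\<sigma> v) (\<sigma> y)) = (C u y - C v y) * (-1/4)"
      if "y \<in> ?R-{u,v}" for y
    proof -
      have "\<sigma> y \<noteq> 1" "\<sigma> y \<noteq> 2" "\<sigma> y \<in> ?R" using perm_other[OF sp, of y u 1] perm_other[OF sp, of y v 2] that su sv by auto
      then have "3 \<le> \<sigma> y" by auto
      then show ?thesis using su sv H12 by simp
    qed
    then have "(\<Sum>y\<in>?R-{u,v}. (C u y - C v y) * (-1/4)) = 0"
      using zero_sum[OF sp u v uv] by (metis (no_types, lifting) sum.cong)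
    then have "(\<Sum>y\<in>?R-{u,v}. C u y - C v y) * (-1/4) = 0" by (simp only: sum_distrib_right)
    then show ?thesis by simp
  qed
  have stepb: "C u w = C v w" if u: "u \<in> ?R" and v: "v \<in> ?R" and w: "w \<in> ?R"
    and uv: "u \<noteq> v" and uw: "u \<noteq> w" and vw: "v \<noteq> w" for u v w
  proof -
    obtain \<sigma> where sp: "\<sigma> permutes ?R" and sw: "\<sigma> w = 1" and su: "\<sigma> u = 2" and sv: "\<sigma> v = 3"
      using perm3[OF w u v uw[symmetric] vw[symmetric] uv] r by auto
    define R'' where "R'' = ?R - {u,v,w}"
    have RR: "?R - {u,v} = insert w R''" and wn: "w \<notin> R''" and fR: "finite R''"
      unfolding R''_def using w uw vw by auto
    have t: "(C u y - C v y) * (H (\<sigma> u) (\<sigma> y) - H (\<sigma> v) (\<sigma> y)) = (C u y - C v y) * (-1/12)"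
      if "y \<in> R''" for y
    proof -
      have "\<sigma> y \<noteq> 1" "\<sigma> y \<noteq> 2" "\<sigma> y \<noteq> 3" "\<sigma> y \<in> ?R"
        using perm_other[OF sp, of y w 1] perm_other[OF sp, of y u 2] perm_other[OF sp, of y v 3]
          that sw su sv unfolding R''_def by auto
      then have "4 \<le> \<sigma> y" by auto
      then show ?thesis using su sv H23 by simp
    qed
    have z: "(C u w - C v w) * (-1/6) + (\<Sum>y\<in>R''. (C u y - C v y) * (-1/12)) = 0"
      using zero_sum[OF sp u v uv] unfolding RR sum.insert[OF fR wn]
      using sum.cong[OF refl t, of R''] sw su sv H23a by simp
    have a: "(C u w - C v w) + (\<Sum>y\<in>R''. C u y - C v y) = 0"
      using stepa[OF u v uv] unfolding RR sum.insert[OF fR wn] .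
    have "(\<Sum>y\<in>R''. (C u y - C v y) * (-1/12)) = (\<Sum>y\<in>R''. C u y - C v y) * (-1/12)"
      by (simp only: sum_distrib_right)
    then have "(C u w - C v w) * (-1/6) + (\<Sum>y\<in>R''. C u y - C v y) * (-1/12) = 0" using z by simp
    then show ?thesis using aux_lin[OF _ a] by simp
  qed
  have stepc: "C x y = C 1 2" if x: "x \<in> ?R" and y: "y \<in> ?R" and xy: "x \<noteq> y" for x y
  proof -
    have one: "1 \<in> ?R" and two: "2 \<in> ?R" using r by auto
    have "\<exists>z\<in>?R. z \<noteq> 1 \<and> C x y = C 1 z"
    proof (cases "x = 1")
      case True then show ?thesis using y xy by (intro bexI[of _ y]) auto
    next
      case False
      show ?thesis
      proof (cases "y = 1")
        case True then show ?thesis using x False sym by auto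
      next
        case y1: False
        then show ?thesis using stepb[OF x one y False] x y xy by auto
      qed
    qed
    then obtain z where z: "z \<in> ?R" "z \<noteq> 1" "C x y = C 1 z" by blast
    show ?thesis
    proof (cases "z = 2")
      case True then show ?thesis using z by simp
    next
      case False
      have "C z 1 = C 2 1" using stepb[OF z(1) two one False z(2)] by simp
      then show ?thesis using z sym by metis
    qed
  qed
  define F where "F x y = (if x = y then 0 else H x y)" for x y
  have "TT r C id = (\<Sum>x\<in>?R. \<Sum>y\<in>?R. C 1 2 * F x y)"
    unfolding TT_def
  proof (intro sum.cong refl)
    fix x y assume "x \<in> ?R" "y \<in> ?R"
    then show "C x y * H (id x) (id y) = C 1 2 * F x y"
      using stepc[of x y] diag[of x] unfolding F_def by (cases "x = y") simp_all
  qed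
  also have "\<dots> = C 1 2 * (\<Sum>x\<in>?R. \<Sum>y\<in>?R. F x y)"
    by (simp add: sum_distrib_left)
  finally have e: "C 1 2 * (\<Sum>x\<in>?R. \<Sum>y\<in>?R. F x y) = 0" using T0[of id] by (simp add: permutes_id)
  have Fnn: "0 \<le> F x y" if "x \<in> ?R" "y \<in> ?R" for x y
    using that H_nonneg unfolding F_def by auto
  have pos1: "0 < (\<Sum>y\<in>?R. F 1 y)"
    by (rule sum_pos2[of _ 3]) (use r Fnn H13 in \<open>auto simp: F_def\<close>)
  have "0 < (\<Sum>x\<in>?R. \<Sum>y\<in>?R. F x y)"
    by (rule sum_pos2[of _ 1]) (use r Fnn pos1 in \<open>auto intro: sum_nonneg\<close>)
  then have c12: "C 1 2 = 0" using e by simp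
  show ?thesis
  proof (cases "x = y")
    case True then show ?thesis using diag by simp
  next
    case False then show ?thesis using stepc[OF xR yR False] c12 by simp
  qed
qed



lemma (in vec_space) many_dep:
  fixes W :: "'a vec set"
  assumes W: "W \<subseteq> carrier_vec n" and fW: "finite W" and lt: "n < card W"
  shows "\<exists>a. (\<forall>l<n. (\<Sum>x\<in>W. a x * x $ l) = 0) \<and> (\<exists>v\<in>W. a v \<noteq> 0)"
proof -
  have "lin_dep W"
  proof (rule ccontr)
    assume "\<not> lin_dep W"
    then have "card W \<le> dim" using li_le_dim(2)[OF fin_dim] W by simp
    then show False using lt dim_is_n by simp
  qed
  then obtain a v where a: "lincomb a W = 0\<^sub>v n" and v: "v \<in> W" "a v \<noteq> 0"
    using finite_lin_dep[OF fW] W by auto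
  have "(\<Sum>x\<in>W. a x * x $ l) = 0" if "l < n" for l
    using lincomb_index[OF that W, of a] a that by simp
  then show ?thesis using v by blast
qed

lemma (in vec_space) rank_ge_rows:
  fixes A :: "'a mat" and Q :: "'q set" and f :: "'q \<Rightarrow> nat"
  assumes A: "A \<in> carrier_mat n nc" and fQ: "finite Q" and fi: "\<And>q. q \<in> Q \<Longrightarrow> f q < n"
    and ind: "\<And>c. (\<And>j. j < nc \<Longrightarrow> (\<Sum>q\<in>Q. c q * A $$ (f q, j)) = 0) \<Longrightarrow> \<forall>q\<in>Q. c q = 0"
  shows "card Q \<le> rank A"
proof (rule ccontr)
  assume "\<not> ?thesis" then have lt: "rank A < card Q" by simp
  have colsC: "set (cols A) \<subseteq> carrier_vec n" using A cols_dim by blast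
  have e: "{} \<subseteq> set (cols A) \<and> lin_indpt {}"
    by (metis (no_types) empty_subsetI fin_dim finite_basis_exists subset_li_is_li vec_vs vectorspace.basis_def)
  obtain S where Sfin: "finite S" and mx: "maximal S (\<lambda>T. T \<subseteq> set (cols A) \<and> lin_indpt T)"
    using maximal_exists_superset[of "set (cols A)" "\<lambda>T. T \<subseteq> set (cols A) \<and> lin_indpt T" "{}"] e by blast
  have SS: "S \<subseteq> set (cols A)" and li: "lin_indpt S" using mx unfolding maximal_def by auto
  have SC: "S \<subseteq> carrier_vec n" using SS colsC by blast
  have rk: "rank A = card S" using rank_card_indpt[OF A mx] .
  have inspan: "s \<in> span S" if s: "s \<in> set (cols A)" for s
  proof (rule ccontr)
    assume ns: "s \<notin> span S"
    have sS: "s \<notin> S" using in_own_span[OF SC] ns by blast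
    have sC: "s \<in> carrier_vec n" using s colsC by blast
    have "lin_indpt (S \<union> {s})" using lin_dep_iff_in_span[OF SC li _ sS] sC ns by simp
    then have "S \<union> {s} = S" using mx s SS unfolding maximal_def by blast
    then show False using sS by blast
  qed
  obtain bs where bs: "set bs = S" "distinct bs" using finite_distinct_list[OF Sfin] by blast
  define m where "m = card S"
  have lbs: "length bs = m" using distinct_card[OF bs(2)] bs(1) m_def by simp
  define w where "w q = vec m (\<lambda>l. bs ! l $ f q)" for q
  have "\<exists>c. (\<forall>l<m. (\<Sum>q\<in>Q. c q * (bs ! l $ f q)) = 0) \<and> (\<exists>q\<in>Q. c q \<noteq> 0)"
  proof (cases "inj_on w Q")
    case False
    then obtain q1 q2 where q: "q1 \<in> Q" "q2 \<in> Q" "q1 \<noteq> q2" "w q1 = w q2"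
      unfolding inj_on_def by blast
    define c where "c q = (if q = q1 then 1 else if q = q2 then -1 else (0::'a))" for q
    have "(\<Sum>q\<in>Q. c q * (bs ! l $ f q)) = 0" if l: "l < m" for l
    proof -
      have "(\<Sum>q\<in>Q. c q * (bs ! l $ f q)) =
         (\<Sum>q\<in>Q. (if q = q1 then bs ! l $ f q else 0)) - (\<Sum>q\<in>Q. (if q = q2 then bs ! l $ f q else 0))"
        unfolding sum_subtractf[symmetric] c_def using q(3) by (intro sum.cong) auto
      also have "\<dots> = bs ! l $ f q1 - bs ! l $ f q2" using q fQ by (simp add: sum.delta)
      also have "\<dots> = 0"
      proof -
        have "w q1 $ l = w q2 $ l" using q(4) by simp
        then show ?thesis using l unfolding w_def by simp
      qed
      finally show ?thesis .
    qed
    moreover have "c q1 \<noteq> 0" unfolding c_def by simp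
    ultimately show ?thesis using q(1) by blast
  next
    case True
    define W where "W = w ` Q"
    have cW: "card W = card Q" unfolding W_def using card_image[OF True] .
    have WC: "W \<subseteq> carrier_vec m" unfolding W_def w_def by auto
    have "m < card W" using cW lt rk m_def by simp
    then obtain a where a: "\<forall>l<m. (\<Sum>x\<in>W. a x * x $ l) = 0" and v: "\<exists>v\<in>W. a v \<noteq> 0"
      using vec_space.many_dep[OF WC] fQ unfolding W_def by blast
    define c where "c q = a (w q)" for q
    have "(\<Sum>q\<in>Q. c q * (bs ! l $ f q)) = 0" if l: "l < m" for l
    proof -
      have "(\<Sum>q\<in>Q. c q * (bs ! l $ f q)) = (\<Sum>q\<in>Q. a (w q) * (w q $ l))"
        unfolding c_def w_def using l by simp
      also have "\<dots> = (\<Sum>x\<in>W. a x * x $ l)" unfolding W_def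
        using sum.reindex[OF True, of "\<lambda>x. a x * x $ l"] by simp
      finally show ?thesis using a l by simp
    qed
    moreover have "\<exists>q\<in>Q. c q \<noteq> 0" using v unfolding W_def c_def by auto
    ultimately show ?thesis by blast
  qed
  then obtain c where c0: "\<And>l. l < m \<Longrightarrow> (\<Sum>q\<in>Q. c q * (bs ! l $ f q)) = 0" and cnz: "\<exists>q\<in>Q. c q \<noteq> 0"
    by blast
  have "(\<Sum>q\<in>Q. c q * A $$ (f q, j)) = 0" if j: "j < nc" for j
  proof -
    have cj: "col A j \<in> set (cols A)" using j A by (simp add: cols_def)
    then have "col A j \<in> span S" by (rule inspan)
    then obtain a B where B: "B \<subseteq> S" "finite B" and cl: "col A j = lincomb a B"
      unfolding span_def by blast
    have BC: "B \<subseteq> carrier_vec n" using B SC by blast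
    have ent: "A $$ (f q, j) = (\<Sum>b\<in>B. a b * b $ f q)" if q: "q \<in> Q" for q
    proof -
      have "A $$ (f q, j) = col A j $ f q" using fi[OF q] j A by simp
      then show ?thesis unfolding cl using lincomb_index[OF fi[OF q] BC] by simp
    qed
    have zb: "(\<Sum>q\<in>Q. c q * b $ f q) = 0" if b: "b \<in> B" for b
    proof -
      obtain l where l: "l < length bs" "bs ! l = b" using b B bs(1) by (metis in_set_conv_nth subsetD)
      show ?thesis using c0[of l] l lbs by simp
    qed
    have "(\<Sum>q\<in>Q. c q * A $$ (f q, j)) = (\<Sum>q\<in>Q. \<Sum>b\<in>B. a b * (c q * b $ f q))"
      using ent by (simp add: sum_distrib_left algebra_simps)
    also have "\<dots> = (\<Sum>b\<in>B. a b * (\<Sum>q\<in>Q. c q * b $ f q))"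
      by (subst sum.swap) (simp add: sum_distrib_left)
    also have "\<dots> = 0" using zb by simp
    finally show ?thesis .
  qed
  then have "\<forall>q\<in>Q. c q = 0" by (rule ind)
  then show False using cnz by blast
qed



definition Pset :: "nat \<Rightarrow> (nat \<times> nat) set" where
  "Pset r = {(u,v). 1 \<le> u \<and> u < v \<and> v \<le> r}"

lemma Pset_sub: "Pset r \<subseteq> {1..r} \<times> {1..r}" unfolding Pset_def by auto
lemma Pset_fin: "finite (Pset r)" using Pset_sub by (rule finite_subset) auto

lemma card_Pset: "2 * card (Pset r) = r * (r - 1)"
proof (induction r)
  case 0
  have "Pset 0 = {}" unfolding Pset_def by auto
  then show ?case by simp
next
  case (Suc r)
  have eq: "Pset (Suc r) = Pset r \<union> (\<lambda>u. (u, Suc r)) ` {1..r}"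
    unfolding Pset_def by auto
  have disj: "Pset r \<inter> (\<lambda>u. (u, Suc r)) ` {1..r} = {}" unfolding Pset_def by auto
  have ci: "card ((\<lambda>u. (u, Suc r)) ` {1..r}) = r" by (subst card_image) (auto simp: inj_on_def)
  have "card (Pset (Suc r)) = card (Pset r) + r"
    unfolding eq using card_Un_disjoint[OF Pset_fin _ disj] ci by simp
  then show ?case using Suc.IH by (cases r) (auto simp: algebra_simps)
qed

definition Csym :: "(nat \<times> nat \<Rightarrow> real) \<Rightarrow> nat \<Rightarrow> nat \<Rightarrow> real" where
  "Csym c x y = (if x < y then c (x,y) else if y < x then c (y,x) else 0)"

lemma TT_pairs:
  "TT r (Csym c) \<sigma> = 2 * (\<Sum>q\<in>Pset r. c q * H (\<sigma> (fst q)) (\<sigma> (snd q)))"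
proof -
  let ?R = "{1..r}"
  define K where "K x y = H (\<sigma> x) (\<sigma> y)" for x y
  have Ks: "K x y = K y x" for x y unfolding K_def by (rule H_sym)
  define G where "G x y = (if x < y then c (x,y) * K x y else 0)" for x y
  have split: "Csym c x y * K x y = G x y + G y x" for x y
    unfolding Csym_def G_def using Ks[of x y] by auto
  have sG: "(\<Sum>x\<in>?R. \<Sum>y\<in>?R. G x y) = (\<Sum>q\<in>Pset r. c q * K (fst q) (snd q))"
  proof -
    have "(\<Sum>x\<in>?R. \<Sum>y\<in>?R. G x y) = (\<Sum>q\<in>?R \<times> ?R. G (fst q) (snd q))"
      by (simp add: sum.cartesian_product split_def)
    also have "\<dots> = (\<Sum>q\<in>{q \<in> ?R \<times> ?R. fst q < snd q}. c q * K (fst q) (snd q))"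
      unfolding G_def by (subst sum.inter_filter) (auto intro!: sum.cong)
    also have "{q \<in> ?R \<times> ?R. fst q < snd q} = Pset r" unfolding Pset_def by auto
    finally show ?thesis .
  qed
  have "TT r (Csym c) \<sigma> = (\<Sum>x\<in>?R. \<Sum>y\<in>?R. G x y) + (\<Sum>x\<in>?R. \<Sum>y\<in>?R. G y x)"
    unfolding TT_def K_def[symmetric] split by (simp add: sum.distrib)
  also have "(\<Sum>x\<in>?R. \<Sum>y\<in>?R. G y x) = (\<Sum>x\<in>?R. \<Sum>y\<in>?R. G x y)"
    by (rule sum.swap)
  finally show ?thesis using sG unfolding K_def by simp
qed

definition yv :: "nat \<Rightarrow> nat \<Rightarrow> nat \<Rightarrow> real" where
  "yv u v = (\<lambda>i. if i = u \<or> i = v then 1 else 0)"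

lemma yv_in: "u \<in> {1..r} \<Longrightarrow> v \<in> {1..r} \<Longrightarrow> yv u v \<in> ys_set r"
  unfolding ys_set_def yv_def by (auto simp: fun_eq_iff)

lemma sum_ind2:
  fixes a b :: nat
  shows "finite A \<Longrightarrow> (\<Sum>j\<in>A. (if j = a \<or> j = b then 1 else 0::real)) = real (card (A \<inter> {a,b}))"
proof -
  assume fA: "finite A"
  have "(\<Sum>j\<in>A \<inter> {a,b}. (1::real)) = (\<Sum>j\<in>A. if j \<in> {a,b} then 1 else 0)"
    by (rule sum.inter_restrict[OF fA])
  then show ?thesis by simp
qed

lemma ell_pair:
  assumes sp: "\<sigma> permutes {1..r}" and u: "u \<in> {1..r}" and v: "v \<in> {1..r}" and uv: "u \<noteq> v"
  shows "ell_MAP r (yv u v) \<sigma> = H (\<sigma> u) (\<sigma> v)"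
proof -
  let ?R = "{1..r}"
  have l1: "l1norm r (yv u v) = 2"
  proof -
    have "l1norm r (yv u v) = (\<Sum>i\<in>?R. (if i = u \<or> i = v then 1 else 0::real))"
      unfolding l1norm_def yv_def by (intro sum.cong) auto
    also have "\<dots> = real (card (?R \<inter> {u,v}))" by (rule sum_ind2) simp
    also have "?R \<inter> {u,v} = {u,v}" using u v by auto
    finally show ?thesis using uv by simp
  qed
  have S: "{i \<in> ?R. yv u v i = 1} = {u,v}" using u v unfolding yv_def by auto
  have su: "\<sigma> u \<in> ?R" and sv: "\<sigma> v \<in> ?R" using u v permutes_in_image[OF sp] by auto
  have sne: "\<sigma> u \<noteq> \<sigma> v" using uv permutes_inj[OF sp] by (auto dest: injD)
  have inner: "(\<Sum>j=1..\<sigma> x. yv u v (inv_into UNIV \<sigma> j)) = (if \<sigma> y < \<sigma> x then 2 else 1)"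
    if xy: "(x = u \<and> y = v) \<or> (x = v \<and> y = u)" for x y
  proof -
    have "yv u v (inv_into UNIV \<sigma> j) = (if j = \<sigma> x \<or> j = \<sigma> y then 1 else 0)" for j
    proof -
      have inv: "inv_into UNIV \<sigma> j = w \<longleftrightarrow> \<sigma> w = j" for w by (rule permutes_inv_eq[OF sp])
      have e: "(inv_into UNIV \<sigma> j = u \<or> inv_into UNIV \<sigma> j = v) \<longleftrightarrow> (j = \<sigma> x \<or> j = \<sigma> y)"
        by (simp only: inv) (use xy in auto)
      show ?thesis unfolding yv_def by (simp only: e)
    qed
    then have "(\<Sum>j=1..\<sigma> x. yv u v (inv_into UNIV \<sigma> j)) = real (card ({1..\<sigma> x} \<inter> {\<sigma> x, \<sigma> y}))"
      using sum_ind2[of "{1..\<sigma> x}" "\<sigma> x" "\<sigma> y"] by simp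
    also have "{1..\<sigma> x} \<inter> {\<sigma> x, \<sigma> y} = (if \<sigma> y < \<sigma> x then {\<sigma> x, \<sigma> y} else {\<sigma> x})"
      using xy su sv sne by auto
    finally show ?thesis using xy sne by auto
  qed
  have "ell_MAP r (yv u v) \<sigma> = 1 - (1/2) * ((1 / real (\<sigma> u)) * (if \<sigma> v < \<sigma> u then 2 else 1)
         + (1 / real (\<sigma> v)) * (if \<sigma> u < \<sigma> v then 2 else 1))"
    unfolding ell_MAP_def l1 S using uv inner[of u v] inner[of v u] by simp
  also have "\<dots> = H (\<sigma> u) (\<sigma> v)"
  proof -
    have pu: "real (\<sigma> u) \<noteq> 0" "real (\<sigma> v) \<noteq> 0" using su sv by auto
    show ?thesis
      unfolding H_def using sne by (cases "\<sigma> u < \<sigma> v") (auto simp: min_def max_def field_simps pu)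
  qed
  finally show ?thesis .
qed


theorem mainTheorem17:
  fixes r :: nat and ys :: "(nat \<Rightarrow> real) list" and ss :: "(nat \<Rightarrow> nat) list"
  assumes "r \<ge> 2"
    and "distinct ys" and "set ys = ys_set r"
    and "distinct ss" and "set ss = perms_set r"
  shows "real (vec_space.rank (length ys) (L_MAP r ys ss)) \<ge> real r * (real r - 1) / 2 - 2"
proof (cases "r = 2")
  case True
  have "real r * (real r - 1) / 2 - 2 = -1" using True by simp
  moreover have "0 \<le> real (vec_space.rank (length ys) (L_MAP r ys ss))" by (rule of_nat_0_le_iff)
  ultimately show ?thesis by linarith
next
  case False
  then have r3: "3 \<le> r" using assms(1) by simp
  let ?n = "length ys" and ?nc = "length ss" and ?A = "L_MAP r ys ss" and ?R = "{1..r}"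
  have Ac: "?A \<in> carrier_mat ?n ?nc" unfolding L_MAP_def by simp
  define f where "f q = (SOME a. a < ?n \<and> ys ! a = yv (fst q) (snd q))" for q
  have fq: "f q < ?n \<and> ys ! f q = yv (fst q) (snd q)" if q: "q \<in> Pset r" for q
  proof -
    have "yv (fst q) (snd q) \<in> set ys" using q assms(3) yv_in unfolding Pset_def by auto
    then have "\<exists>a. a < ?n \<and> ys ! a = yv (fst q) (snd q)" by (simp add: in_set_conv_nth)
    then show ?thesis unfolding f_def by (rule someI_ex)
  qed
  have ind: "\<forall>q\<in>Pset r. c q = 0"
    if hyp: "\<And>j. j < ?nc \<Longrightarrow> (\<Sum>q\<in>Pset r. c q * ?A $$ (f q, j)) = 0" for c
  proof -
    have T0: "TT r (Csym c) \<sigma> = 0" if sp: "\<sigma> permutes ?R" for \<sigma>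
    proof -
      have "\<sigma> \<in> set ss" using sp assms(5) unfolding perms_set_def by simp
      then obtain j where j: "j < ?nc" "ss ! j = \<sigma>" by (auto simp: in_set_conv_nth)
      have "?A $$ (f q, j) = H (\<sigma> (fst q)) (\<sigma> (snd q))" if q: "q \<in> Pset r" for q
      proof -
        have "?A $$ (f q, j) = ell_MAP r (ys ! f q) (ss ! j)"
          unfolding L_MAP_def using fq[OF q] j by simp
        also have "\<dots> = ell_MAP r (yv (fst q) (snd q)) \<sigma>" using fq[OF q] j by simp
        also have "\<dots> = H (\<sigma> (fst q)) (\<sigma> (snd q))"
          by (rule ell_pair[OF sp]) (use q in \<open>auto simp: Pset_def\<close>)
        finally show ?thesis .
      qed
      then have "(\<Sum>q\<in>Pset r. c q * H (\<sigma> (fst q)) (\<sigma> (snd q))) = 0"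
        using hyp[OF j(1)] by (metis (no_types, lifting) sum.cong)
      then show ?thesis unfolding TT_pairs by simp
    qed
    have diag: "Csym c x x = 0" for x unfolding Csym_def by simp
    have sym: "Csym c x y = Csym c y x" for x y unfolding Csym_def by auto
    show ?thesis
    proof
      fix q assume q: "q \<in> Pset r"
      obtain u v where uv: "q = (u,v)" by (cases q)
      have "Csym c u v = 0"
        using core[OF r3 diag sym T0] q uv unfolding Pset_def by auto
      then show "c q = 0" using q uv unfolding Csym_def Pset_def by auto
    qed
  qed
  have "card (Pset r) \<le> vec_space.rank ?n ?A"
  proof (rule vec_space.rank_ge_rows[OF Ac Pset_fin])
    fix q assume "q \<in> Pset r" then show "f q < ?n" using fq by blast
  next
    fix c assume h: "\<And>j. j < ?nc \<Longrightarrow> (\<Sum>q\<in>Pset r. c q * ?A $$ (f q, j)) = 0"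
    show "\<forall>q\<in>Pset r. c q = 0" by (rule ind) (rule h)
  qed
  then have le: "real (card (Pset r)) \<le> real (vec_space.rank ?n ?A)" by simp
  have "2 * real (card (Pset r)) = real r * (real r - 1)"
  proof -
    have "real (2 * card (Pset r)) = real (r * (r - 1))" using card_Pset by metis
    then show ?thesis using r3 by (simp add: of_nat_diff)
  qed
  then show ?thesis using le by linarith
qed


end
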